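(* Let $k=\mathbb R$ or $\mathbb C$, let $(V,g)$ be an inner product vector space over $k$, let $f\in\operatorname{End}_k(V)$, and let $\mathcal H_f=\{H_i\}_{i\in I}$ be a family of finite-dimensional $f$-invariant subspaces with $V=\bigoplus_{i\in I}H_i$ and $H_i\subseteq\big[\sum_{j\ne i}H_j\big]^\perp$ for every $i\in I$. Then $f$ is admissible for the Moore-Penrose inverse and $f^+_{\mathcal H_f}=f^\dagger$.
   Context: An inner product is linear in the first argument, conjugate-symmetric and positive definite; $U^\perp=\{v\in V:g(u,v)=0\ \forall u\in U\}$. $V=\bigoplus_{i\in I}H_i$ means the natural map $\bigoplus H_i\to V$ is an isomorphism. $f$ is admissible for the Moore-Penrose inverse if $V=\operatorname{Ker} f\oplus[\operatorname{Ker} f]^\perp=\operatorname{Im} f\oplus[\operatorname{Im} f]^\perp$; its Moore-Penrose inverse $f^\dagger$ is then the linear map equal to $(f|_{[\operatorname{Ker} f]^\perp})^{-1}$ on $\operatorname{Im} f$ and $0$ on $[\operatorname{Im} f]^\perp$. Writing $f_i=f|_{H_i}\in\operatorname{End}_k(H_i)$ (with $H_i$ carrying the restricted inner product), $f_i^\dagger$ denotes its (finite-dimensional) Moore-Penrose inverse, and $f^+_{\mathcal H_f}$ is the unique linear endomorphism of $V$ with $f^+_{\mathcal H_f}|_{H_i}=f_i^\dagger$ for all $i\in I$. *)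

theory Defs
  imports Complex_Main
begin

text \<open>Everything is stated for a scalar field 'k (instantiated with real and with complex),
  an abstract vector space 'v with scalar multiplication smul (locale vector_space),
  a conjugation map cnj on the scalars (identity for real, cnj for complex),
  and a sesquilinear form g.\<close>

definition inner_product ::
  "('k::real_field \<Rightarrow> 'v::ab_group_add \<Rightarrow> 'v) \<Rightarrow> ('k \<Rightarrow> 'k) \<Rightarrow> ('v \<Rightarrow> 'v \<Rightarrow> 'k) \<Rightarrow> bool" where
  "inner_product smul cnj' g \<longleftrightarrow>
     vector_space smul \<and>
     (\<forall>u v w. g (u + v) w = g u w + g v w) \<and>
     (\<forall>a u v. g (smul a u) v = a * g u v) \<and>
     (\<forall>u v. g v u = cnj' (g u v)) \<and>
     (\<forall>v. v \<noteq> 0 \<longrightarrow> (\<exists>r::real. r > 0 \<and> g v v = of_real r))"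

text \<open>Linear maps on a subset W (intended to be a subspace); for W = UNIV this is End_k(V).\<close>
definition linear_on :: "('k \<Rightarrow> 'v::ab_group_add \<Rightarrow> 'v) \<Rightarrow> 'v set \<Rightarrow> ('v \<Rightarrow> 'v) \<Rightarrow> bool" where
  "linear_on smul W f \<longleftrightarrow>
     (\<forall>x\<in>W. \<forall>y\<in>W. f (x + y) = f x + f y) \<and> (\<forall>a. \<forall>x\<in>W. f (smul a x) = smul a (f x))"

definition fin_dim_subspace :: "('k::field \<Rightarrow> 'v::ab_group_add \<Rightarrow> 'v) \<Rightarrow> 'v set \<Rightarrow> bool" where
  "fin_dim_subspace smul H \<longleftrightarrow> (\<exists>B. finite B \<and> H = module.span smul B)"

definition perp_in :: "('v \<Rightarrow> 'v \<Rightarrow> 'k::zero) \<Rightarrow> 'v set \<Rightarrow> 'v set \<Rightarrow> 'v set" where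
  "perp_in g W U = {v \<in> W. \<forall>u\<in>U. g u v = 0}"

definition direct_sum2 :: "'v::ab_group_add set \<Rightarrow> 'v set \<Rightarrow> 'v set \<Rightarrow> bool" where
  "direct_sum2 W A B \<longleftrightarrow> (\<forall>v\<in>W. \<exists>!p. fst p \<in> A \<and> snd p \<in> B \<and> v = fst p + snd p)"

text \<open>V (= UNIV) is the internal direct sum of the family H_i, i in I: the natural map from
  the external direct sum (finitely supported families h with h i in H i) to V is bijective.\<close>
definition internal_direct_sum :: "'i set \<Rightarrow> ('i \<Rightarrow> 'v::comm_monoid_add set) \<Rightarrow> bool" where
  "internal_direct_sum I H \<longleftrightarrow>
     (\<forall>v. \<exists>!h. (\<forall>i\<in>I. h i \<in> H i) \<and> (\<forall>i. i \<notin> I \<longrightarrow> h i = 0) \<and>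
              finite {i. h i \<noteq> 0} \<and> v = sum h {i. h i \<noteq> 0})"

definition subspace_sum :: "'i set \<Rightarrow> ('i \<Rightarrow> 'v::comm_monoid_add set) \<Rightarrow> 'v set" where
  "subspace_sum J H = {v. \<exists>F h. finite F \<and> F \<subseteq> J \<and> (\<forall>j\<in>F. h j \<in> H j) \<and> v = sum h F}"

definition admissible_on :: "('v \<Rightarrow> 'v \<Rightarrow> 'k::zero) \<Rightarrow> 'v::ab_group_add set \<Rightarrow> ('v \<Rightarrow> 'v) \<Rightarrow> bool" where
  "admissible_on g W f \<longleftrightarrow>
     direct_sum2 W {v\<in>W. f v = 0} (perp_in g W {v\<in>W. f v = 0}) \<and>
     direct_sum2 W (f ` W) (perp_in g W (f ` W))"

definition is_MP_inverse_on ::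
  "('k \<Rightarrow> 'v \<Rightarrow> 'v) \<Rightarrow> ('v \<Rightarrow> 'v \<Rightarrow> 'k::zero) \<Rightarrow> 'v::ab_group_add set \<Rightarrow> ('v \<Rightarrow> 'v) \<Rightarrow> ('v \<Rightarrow> 'v) \<Rightarrow> bool" where
  "is_MP_inverse_on smul g W f f' \<longleftrightarrow>
     admissible_on g W f \<and> linear_on smul W f' \<and> f' ` W \<subseteq> W \<and>
     (\<forall>y\<in>f ` W. f' y \<in> perp_in g W {v\<in>W. f v = 0} \<and> f (f' y) = y) \<and>
     (\<forall>y\<in>perp_in g W (f ` W). f' y = 0)"

definition MP_inv ::
  "('k \<Rightarrow> 'v \<Rightarrow> 'v) \<Rightarrow> ('v \<Rightarrow> 'v \<Rightarrow> 'k::zero) \<Rightarrow> 'v::ab_group_add set \<Rightarrow> ('v \<Rightarrow> 'v) \<Rightarrow> ('v \<Rightarrow> 'v)" where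
  "MP_inv smul g W f = (THE f'. is_MP_inverse_on smul g W f f' \<and> (\<forall>x. x \<notin> W \<longrightarrow> f' x = 0))"

definition MP_plus ::
  "('k \<Rightarrow> 'v \<Rightarrow> 'v) \<Rightarrow> ('v \<Rightarrow> 'v \<Rightarrow> 'k::zero) \<Rightarrow> 'i set \<Rightarrow> ('i \<Rightarrow> 'v::ab_group_add set) \<Rightarrow> ('v \<Rightarrow> 'v) \<Rightarrow> ('v \<Rightarrow> 'v)" where
  "MP_plus smul g I H f = (THE fp. linear_on smul UNIV fp \<and>
      (\<forall>i\<in>I. \<forall>x\<in>H i. fp x = MP_inv smul g (H i) f x))"

definition cor_hyps ::
  "('k::real_field \<Rightarrow> 'v::ab_group_add \<Rightarrow> 'v) \<Rightarrow> ('k \<Rightarrow> 'k) \<Rightarrow> ('v \<Rightarrow> 'v \<Rightarrow> 'k) \<Rightarrow> ('v \<Rightarrow> 'v)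
    \<Rightarrow> 'i set \<Rightarrow> ('i \<Rightarrow> 'v set) \<Rightarrow> bool" where
  "cor_hyps smul cnj' g f I H \<longleftrightarrow>
     inner_product smul cnj' g \<and>
     linear_on smul UNIV f \<and>
     (\<forall>i\<in>I. fin_dim_subspace smul (H i) \<and> f ` H i \<subseteq> H i) \<and>
     internal_direct_sum I H \<and>
     (\<forall>i\<in>I. H i \<subseteq> perp_in g UNIV (subspace_sum (I - {i}) H))"

definition cor_concl ::
  "('k \<Rightarrow> 'v::ab_group_add \<Rightarrow> 'v) \<Rightarrow> ('v \<Rightarrow> 'v \<Rightarrow> 'k::zero) \<Rightarrow> ('v \<Rightarrow> 'v)
    \<Rightarrow> 'i set \<Rightarrow> ('i \<Rightarrow> 'v set) \<Rightarrow> bool" where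
  "cor_concl smul g f I H \<longleftrightarrow>
     admissible_on g UNIV f \<and> MP_plus smul g I H f = MP_inv smul g UNIV f"

end

theory Submission imports Defs begin

locale ips = vector_space smul
  for smul :: "'k::real_field \<Rightarrow> 'v::ab_group_add \<Rightarrow> 'v" +
  fixes cnj' :: "'k \<Rightarrow> 'k" and g :: "'v \<Rightarrow> 'v \<Rightarrow> 'k"
  assumes ip: "inner_product smul cnj' g"
    and cnj_add: "cnj' (a + b) = cnj' a + cnj' b"
    and cnj_mult: "cnj' (a * b) = cnj' a * cnj' b"
    and cnj_inv: "cnj' (cnj' a) = a"
begin


lemma g_add1: "g (u + v) w = g u w + g v w" using ip unfolding inner_product_def by blast
lemma g_smul1: "g (smul a u) v = a * g u v" using ip unfolding inner_product_def by blast
lemma g_sym: "g v u = cnj' (g u v)" using ip unfolding inner_product_def by blast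
lemma cnj0: "cnj' 0 = 0" using cnj_add[of 0 0] by simp
lemma g_add2: "g u (v + w) = g u v + g u w"
proof -
  have "g u (v + w) = cnj' (g (v + w) u)" by (rule g_sym)
  also have "\<dots> = cnj' (g v u) + cnj' (g w u)" by (simp only: g_add1 cnj_add)
  also have "\<dots> = g u v + g u w" by (simp only: g_sym[of u v, symmetric] g_sym[of u w, symmetric])
  finally show ?thesis .
qed
lemma g_smul2: "g u (smul a v) = cnj' a * g u v"
proof -
  have "g u (smul a v) = cnj' (g (smul a v) u)" by (rule g_sym)
  also have "\<dots> = cnj' a * cnj' (g v u)" by (simp only: g_smul1 cnj_mult)
  also have "\<dots> = cnj' a * g u v" by (simp only: g_sym[of u v, symmetric])
  finally show ?thesis .
qed
lemma g_zero1[simp]: "g 0 v = 0" using g_add1[of 0 0 v] by simp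
lemma g_zero2[simp]: "g v 0 = 0" using g_add2[of v 0 0] by simp
lemma g_sym0: "g u v = 0 \<longleftrightarrow> g v u = 0"
proof
  assume "g u v = 0" then show "g v u = 0" using g_sym[of v u] cnj0 by simp
next
  assume "g v u = 0" then show "g u v = 0" using g_sym[of u v] cnj0 by simp
qed
lemma g_minus2: "g u (- v) = - g u v"
  using g_add2[of u "-v" v] by (simp add: eq_neg_iff_add_eq_0)
lemma g_diff2: "g u (v - w) = g u v - g u w"
  using g_add2[of u v "-w"] g_minus2 by simp
lemma g_minus1: "g (- u) v = - g u v"
  using g_add1[of "-u" u v] by (simp add: eq_neg_iff_add_eq_0)
lemma g_diff1: "g (u - w) v = g u v - g w v"
  using g_add1[of u "-w"] g_minus1 by simp
lemma g_sum1: "g (sum h F) v = (\<Sum>i\<in>F. g (h i) v)"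
  by (induction F rule: infinite_finite_induct) (auto simp: g_add1)
lemma g_sum2: "g v (sum h F) = (\<Sum>i\<in>F. g v (h i))"
  by (induction F rule: infinite_finite_induct) (auto simp: g_add2)
lemma aniso: "g v v = 0 \<Longrightarrow> v = 0"
proof (rule ccontr)
  assume "g v v = 0" "v \<noteq> 0"
  have "\<forall>v. v \<noteq> 0 \<longrightarrow> (\<exists>r::real. r > 0 \<and> g v v = of_real r)"
    using ip unfolding inner_product_def by blast
  then obtain r :: real where "r > 0" "g v v = of_real r" using \<open>v \<noteq> 0\<close> by blast
  then show False using \<open>g v v = 0\<close> by simp
qed

lemma g_span1: "u \<in> span S \<Longrightarrow> (\<And>s. s \<in> S \<Longrightarrow> g s v = 0) \<Longrightarrow> g u v = 0"
proof (induction rule: span_induct)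
  case base
  show ?case unfolding subspace_def by (auto simp: g_add1 g_smul1)
qed auto

lemma perp_subspace: "subspace W \<Longrightarrow> subspace (perp_in g W U)"
  unfolding subspace_def perp_in_def by (auto simp: g_add2 g_smul2)

lemma perp_span: "perp_in g W (span S) = perp_in g W S"
proof
  show "perp_in g W (span S) \<subseteq> perp_in g W S"
    unfolding perp_in_def using span_superset by blast
  show "perp_in g W S \<subseteq> perp_in g W (span S)"
  proof
    fix v assume "v \<in> perp_in g W S"
    then have "v \<in> W" "\<And>s. s \<in> S \<Longrightarrow> g s v = 0" unfolding perp_in_def by auto
    then show "v \<in> perp_in g W (span S)" unfolding perp_in_def using g_span1 by blast
  qed
qed


lemma ds_intro:
  assumes "subspace A" "subspace B" "\<And>x. x \<in> A \<Longrightarrow> x \<in> B \<Longrightarrow> x = 0"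
    "\<And>v. v \<in> W \<Longrightarrow> \<exists>a b. a \<in> A \<and> b \<in> B \<and> v = a + b"
  shows "direct_sum2 W A B"
  unfolding direct_sum2_def
proof
  fix v assume "v \<in> W"
  then obtain a b where ab: "a \<in> A" "b \<in> B" "v = a + b" using assms(4) by blast
  show "\<exists>!p. fst p \<in> A \<and> snd p \<in> B \<and> v = fst p + snd p"
  proof (rule ex1I[of _ "(a, b)"])
    fix p assume p: "fst p \<in> A \<and> snd p \<in> B \<and> v = fst p + snd p"
    have "fst p - a \<in> A" using p ab assms(1) subspace_diff by blast
    moreover have "fst p - a = b - snd p" using p ab by (simp add: algebra_simps)
    moreover have "b - snd p \<in> B" using p ab assms(2) subspace_diff by blast
    ultimately have "fst p - a = 0" using assms(3) by metis
    then have "fst p = a" by simp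
    moreover then have "snd p = b" using p ab by simp
    ultimately show "p = (a, b)" by (simp add: prod_eq_iff)
  qed (use ab in simp)
qed

lemma perp_inter: "x \<in> U \<Longrightarrow> x \<in> perp_in g W U \<Longrightarrow> x = 0"
  unfolding perp_in_def using aniso by blast

lemma decomp_fin:
  assumes W: "subspace W" and fin: "finite S" and SW: "S \<subseteq> W"
  shows "\<forall>v\<in>W. \<exists>p q. p \<in> span S \<and> q \<in> W \<and> (\<forall>s\<in>S. g s q = 0) \<and> v = p + q"
  using fin SW
proof (induction S rule: finite_induct)
  case empty
  show ?case
  proof
    fix v assume "v \<in> W"
    then show "\<exists>p q. p \<in> span {} \<and> q \<in> W \<and> (\<forall>s\<in>{}. g s q = 0) \<and> v = p + q"
      by (intro exI[of _ 0] exI[of _ v]) (simp add: span_zero)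
  qed
next
  case (insert s S)
  have sW: "s \<in> W" using insert by auto
  from insert obtain ps qs where psq: "ps \<in> span S" "qs \<in> W" "\<forall>t\<in>S. g t qs = 0" "s = ps + qs"
    using sW by blast
  have gpsqs: "g ps qs = 0" using g_span1 psq by blast
  have qs_span: "qs \<in> span (insert s S)"
  proof -
    have "qs = s - ps" using psq by simp
    moreover have "s \<in> span (insert s S)" by (simp add: span_base)
    moreover have "ps \<in> span (insert s S)" using psq span_mono[of S "insert s S"] by blast
    ultimately show ?thesis using span_diff by metis
  qed
  show ?case
  proof
    fix v assume vW: "v \<in> W"
    from insert obtain p q where pq: "p \<in> span S" "q \<in> W" "\<forall>t\<in>S. g t q = 0" "v = p + q"
      using vW by blast
    have pspan: "p \<in> span (insert s S)" using pq span_mono[of S "insert s S"] by blast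
    show "\<exists>p q. p \<in> span (insert s S) \<and> q \<in> W \<and> (\<forall>t\<in>insert s S. g t q = 0) \<and> v = p + q"
    proof (cases "g qs qs = 0")
      case True
      then have "qs = 0" using aniso by blast
      then have "g s q = g ps q" using psq by simp
      also have "\<dots> = 0" using g_span1 psq pq by blast
      finally have "\<forall>t\<in>insert s S. g t q = 0" using pq by simp
      then show ?thesis using pq pspan by (intro exI[of _ p] exI[of _ q]) simp
    next
      case False
      define c where "c = g q s / g qs qs"
      define q' where "q' = q - smul c qs"
      define p' where "p' = p + smul c qs"
      have "v = p' + q'" unfolding p'_def q'_def using pq by (simp add: algebra_simps)
      moreover have "p' \<in> span (insert s S)" unfolding p'_def
        using pspan qs_span span_add span_scale by blast
      moreover have "q' \<in> W" unfolding q'_def using pq psq W subspace_diff subspace_scale by blast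
      moreover have "\<forall>t\<in>S. g t q' = 0" unfolding q'_def using pq psq by (simp add: g_diff2 g_smul2)
      moreover have "g s q' = 0"
      proof -
        have "g qs ps = 0" using gpsqs g_sym0 by blast
        then have "g qs s = g qs qs" using psq by (simp add: g_add2)
        then have "g q' s = 0" unfolding q'_def c_def using False by (simp add: g_diff1 g_smul1)
        then show ?thesis using g_sym0 by blast
      qed
      ultimately show ?thesis by (intro exI[of _ p'] exI[of _ q']) simp
    qed
  qed
qed

lemma ds_fin:
  assumes W: "subspace W" and fin: "finite S" and SW: "S \<subseteq> W"
  shows "direct_sum2 W (span S) (perp_in g W (span S))"
proof (rule ds_intro)
  show "subspace (perp_in g W (span S))" using perp_subspace W by blast
  show "\<And>x. x \<in> span S \<Longrightarrow> x \<in> perp_in g W (span S) \<Longrightarrow> x = 0" using perp_inter by blast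
  fix v assume "v \<in> W"
  then obtain p q where "p \<in> span S" "q \<in> W" "\<forall>s\<in>S. g s q = 0" "v = p + q"
    using decomp_fin[OF assms] by blast
  then have "q \<in> perp_in g W S" unfolding perp_in_def by blast
  then show "\<exists>a b. a \<in> span S \<and> b \<in> perp_in g W (span S) \<and> v = a + b"
    unfolding perp_span using \<open>p \<in> span S\<close> \<open>v = p + q\<close> by blast
qed (rule subspace_span)

lemma fin_dim_sub:
  assumes "finite B" "U \<subseteq> span B" "subspace U"
  shows "\<exists>S. finite S \<and> S \<subseteq> U \<and> U = span S"
proof -
  obtain B' where B': "B' \<subseteq> U" "independent B'" "U \<subseteq> span B'" by (rule basis_exists[of U])
  have "B' \<subseteq> span B" using B'(1) assms(2) by (rule order_trans)
  then have "finite B'" using independent_span_bound[OF assms(1) B'(2)] by simp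
  moreover have "span B' \<subseteq> U" using span_minimal[OF B'(1) assms(3)] .
  ultimately have "finite B' \<and> B' \<subseteq> U \<and> U = span B'" using B'(1,3) by blast
  then show ?thesis by (rule exI)
qed


lemma ds_ex: "direct_sum2 W A B \<Longrightarrow> v \<in> W \<Longrightarrow> \<exists>a b. a \<in> A \<and> b \<in> B \<and> v = a + b"
  unfolding direct_sum2_def by (metis prod.collapse)

definition proj1 :: "'v set \<Rightarrow> 'v set \<Rightarrow> 'v \<Rightarrow> 'v" where
  "proj1 A B v = fst (THE p. fst p \<in> A \<and> snd p \<in> B \<and> v = fst p + snd p)"

lemma proj_eq:
  assumes "direct_sum2 W A B" "a \<in> A" "b \<in> B" "a + b \<in> W"
  shows "proj1 A B (a + b) = a"
proof -
  have "\<exists>!p. fst p \<in> A \<and> snd p \<in> B \<and> a + b = fst p + snd p"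
    using assms unfolding direct_sum2_def by blast
  moreover have "fst (a, b) \<in> A \<and> snd (a, b) \<in> B \<and> a + b = fst (a, b) + snd (a, b)"
    using assms by simp
  ultimately have "(THE p. fst p \<in> A \<and> snd p \<in> B \<and> a + b = fst p + snd p) = (a, b)"
    by (rule the1_equality)
  then show ?thesis unfolding proj1_def by simp
qed

lemma proj_mem:
  assumes "direct_sum2 W A B" "v \<in> W"
  shows "proj1 A B v \<in> A" "v - proj1 A B v \<in> B"
proof -
  obtain a b where ab: "a \<in> A" "b \<in> B" "v = a + b" using ds_ex[OF assms] by blast
  then have "proj1 A B v = a" using proj_eq[OF assms(1) ab(1,2)] assms(2) by simp
  then show "proj1 A B v \<in> A" "v - proj1 A B v \<in> B" using ab by simp_all
qed

lemma isMP_D: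
  assumes "is_MP_inverse_on smul g W f F"
  shows "admissible_on g W f" "linear_on smul W F" "F ` W \<subseteq> W"
    "\<And>y. y \<in> f ` W \<Longrightarrow> F y \<in> perp_in g W {v \<in> W. f v = 0}"
    "\<And>y. y \<in> f ` W \<Longrightarrow> f (F y) = y"
    "\<And>y. y \<in> perp_in g W (f ` W) \<Longrightarrow> F y = 0"
  using assms unfolding is_MP_inverse_on_def by auto

lemma lin_add: "linear_on smul W F \<Longrightarrow> x \<in> W \<Longrightarrow> y \<in> W \<Longrightarrow> F (x + y) = F x + F y"
  unfolding linear_on_def by simp
lemma lin_smul: "linear_on smul W F \<Longrightarrow> x \<in> W \<Longrightarrow> F (smul a x) = smul a (F x)"
  unfolding linear_on_def by simp

lemma MP_unique:
  assumes W: "subspace W" and fl: "linear_on smul UNIV f"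
    and h1: "is_MP_inverse_on smul g W f f1" "\<forall>x. x \<notin> W \<longrightarrow> f1 x = 0"
    and h2: "is_MP_inverse_on smul g W f f2" "\<forall>x. x \<notin> W \<longrightarrow> f2 x = 0"
  shows "f1 = f2"
proof
  fix x
  have fadd: "\<And>x y. f (x + y) = f x + f y" using lin_add[OF fl] by simp
  have fdiff: "\<And>x y. f (x - y) = f x - f y"
    by (metis add_diff_cancel fadd diff_add_cancel)
  show "f1 x = f2 x"
  proof (cases "x \<in> W")
    case False then show ?thesis using h1 h2 by simp
  next
    case True
    have ds: "direct_sum2 W (f ` W) (perp_in g W (f ` W))"
      using isMP_D(1)[OF h1(1)] unfolding admissible_on_def by simp
    obtain y z where yz: "y \<in> f ` W" "z \<in> perp_in g W (f ` W)" "x = y + z"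
      using ds_ex[OF ds True] by blast
    have zW: "z \<in> W" using yz(2) unfolding perp_in_def by simp
    have "y = x - z" using yz(3) by simp
    then have yW: "y \<in> W" using subspace_diff[OF W True zW] by simp
    have "f1 x = f1 y + f1 z" using lin_add[OF isMP_D(2)[OF h1(1)] yW zW] yz(3) by simp
    moreover have "f2 x = f2 y + f2 z" using lin_add[OF isMP_D(2)[OF h2(1)] yW zW] yz(3) by simp
    moreover have "f1 z = 0" "f2 z = 0" using isMP_D(6)[OF h1(1) yz(2)] isMP_D(6)[OF h2(1) yz(2)] by simp_all
    moreover have "f1 y = f2 y"
    proof -
      note a1 = isMP_D(4,5)[OF h1(1) yz(1)]
      note a2 = isMP_D(4,5)[OF h2(1) yz(1)]
      have dp: "f1 y - f2 y \<in> perp_in g W {v \<in> W. f v = 0}"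
        using subspace_diff[OF perp_subspace[OF W] a1(1) a2(1)] .
      moreover have "f1 y - f2 y \<in> W" using dp unfolding perp_in_def by simp
      moreover have "f (f1 y - f2 y) = 0" using a1 a2 fdiff by simp
      ultimately have "f1 y - f2 y = 0" using perp_inter[of "f1 y - f2 y" "{v \<in> W. f v = 0}" W] by simp
      then show ?thesis by simp
    qed
    ultimately show ?thesis by simp
  qed
qed


lemma MP_exists:
  assumes fl: "linear_on smul UNIV f" and adm: "admissible_on g UNIV f"
  shows "\<exists>F. is_MP_inverse_on smul g UNIV f F"
proof -
  define K where "K = {v \<in> UNIV. f v = 0}"
  define M where "M = f ` UNIV"
  define Kp where "Kp = perp_in g UNIV K"
  define Mp where "Mp = perp_in g UNIV M"
  have dsK: "direct_sum2 UNIV K Kp" and dsM: "direct_sum2 UNIV M Mp"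
    using adm unfolding admissible_on_def K_def M_def Kp_def Mp_def by simp_all
  have fadd: "\<And>x y. f (x + y) = f x + f y" using lin_add[OF fl] by simp
  have fsm: "\<And>a x. f (smul a x) = smul a (f x)" using lin_smul[OF fl] by simp
  have f0: "f 0 = 0" using fadd[of 0 0] by simp
  have fdiff: "\<And>x y. f (x - y) = f x - f y"
    by (metis add_diff_cancel fadd diff_add_cancel)
  have subK: "subspace K" unfolding K_def subspace_def using fadd fsm f0 by simp
  have subM: "subspace M" unfolding M_def subspace_def
  proof (intro conjI ballI allI)
    show "0 \<in> range f" using f0 by (metis rangeI)
    fix x y assume "x \<in> range f" "y \<in> range f"
    then obtain a b where "x = f a" "y = f b" by blast
    then show "x + y \<in> range f" using fadd by (metis rangeI)
  next
    fix c x assume "x \<in> range f"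
    then obtain a where "x = f a" by blast
    then show "smul c x \<in> range f" using fsm by (metis rangeI)
  qed
  have subKp: "subspace Kp" unfolding Kp_def by (rule perp_subspace) simp
  have subMp: "subspace Mp" unfolding Mp_def by (rule perp_subspace) simp
  have Kinj: "\<And>a b. a \<in> Kp \<Longrightarrow> b \<in> Kp \<Longrightarrow> f a = f b \<Longrightarrow> a = b"
  proof -
    fix a b assume ab: "a \<in> Kp" "b \<in> Kp" "f a = f b"
    have "a - b \<in> Kp" using subspace_diff[OF subKp ab(1,2)] .
    moreover have "a - b \<in> K" unfolding K_def using ab(3) fdiff by simp
    ultimately have "a - b = 0" using perp_inter unfolding Kp_def by blast
    then show "a = b" by simp
  qed
  have Rex: "\<And>y. y \<in> M \<Longrightarrow> \<exists>x. x \<in> Kp \<and> f x = y"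
  proof -
    fix y assume "y \<in> M"
    then obtain w where w: "y = f w" unfolding M_def by blast
    obtain k p where kp: "k \<in> K" "p \<in> Kp" "w = k + p" using ds_ex[OF dsK] by blast
    have "f w = f p" using kp fadd unfolding K_def by simp
    then have "p \<in> Kp \<and> f p = y" using kp w by simp
    then show "\<exists>x. x \<in> Kp \<and> f x = y" by (rule exI)
  qed
  define R where "R y = (SOME x. x \<in> Kp \<and> f x = y)" for y
  have R: "\<And>y. y \<in> M \<Longrightarrow> R y \<in> Kp \<and> f (R y) = y"
    unfolding R_def using Rex by (rule someI_ex)
  have Ru: "\<And>y x. y \<in> M \<Longrightarrow> x \<in> Kp \<Longrightarrow> f x = y \<Longrightarrow> R y = x"
    using R Kinj by metis
  define P where "P = proj1 M Mp"
  have PM: "\<And>v. P v \<in> M" and PMp: "\<And>v. v - P v \<in> Mp"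
    unfolding P_def using proj_mem[OF dsM] by simp_all
  have Peq: "\<And>a b. a \<in> M \<Longrightarrow> b \<in> Mp \<Longrightarrow> P (a + b) = a"
    unfolding P_def using proj_eq[OF dsM] by simp
  define F where "F v = R (P v)" for v
  have Padd: "P (x + y) = P x + P y" for x y
  proof -
    have "x + y = (P x + P y) + ((x - P x) + (y - P y))" by (simp add: algebra_simps)
    moreover have "P x + P y \<in> M" using subspace_add[OF subM PM PM] .
    moreover have "(x - P x) + (y - P y) \<in> Mp" using subspace_add[OF subMp PMp PMp] .
    ultimately show ?thesis using Peq by metis
  qed
  have Psm: "P (smul c x) = smul c (P x)" for c x
  proof -
    have "smul c x = smul c (P x) + smul c (x - P x)"
      by (simp add: scale_right_distrib[symmetric])
    moreover have "smul c (P x) \<in> M" using subspace_scale[OF subM PM] .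
    moreover have "smul c (x - P x) \<in> Mp" using subspace_scale[OF subMp PMp] .
    ultimately show ?thesis using Peq by metis
  qed
  have Radd: "R (a + b) = R a + R b" if "a \<in> M" "b \<in> M" for a b
  proof (rule Ru)
    show "a + b \<in> M" using subspace_add[OF subM that] .
    show "R a + R b \<in> Kp" using subspace_add[OF subKp] R that by blast
    show "f (R a + R b) = a + b" using fadd R that by simp
  qed
  have Rsm: "R (smul c a) = smul c (R a)" if "a \<in> M" for a c
  proof (rule Ru)
    show "smul c a \<in> M" using subspace_scale[OF subM that] .
    show "smul c (R a) \<in> Kp" using subspace_scale[OF subKp] R that by blast
    show "f (smul c (R a)) = smul c a" using fsm R that by simp
  qed
  have "is_MP_inverse_on smul g UNIV f F"
    unfolding is_MP_inverse_on_def
  proof (intro conjI ballI)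
    show "admissible_on g UNIV f" by (rule adm)
    show "linear_on smul UNIV F" unfolding linear_on_def F_def
      using Padd Psm Radd Rsm PM by simp
    show "F ` UNIV \<subseteq> UNIV" by simp
  next
    fix y assume y: "y \<in> f ` UNIV"
    then have "P y = y" using Peq[of y 0] subspace_0[OF subMp] unfolding M_def by simp
    then show "F y \<in> perp_in g UNIV {v \<in> UNIV. f v = 0}" "f (F y) = y"
      unfolding F_def using R[of y] y unfolding M_def Kp_def K_def by simp_all
  next
    fix y assume y: "y \<in> perp_in g UNIV (f ` UNIV)"
    then have "P y = 0" using Peq[of 0 y] subspace_0[OF subM] unfolding Mp_def M_def by simp
    moreover have "R 0 = 0" using Ru[of 0 0] subspace_0[OF subM] subspace_0[OF subKp] f0 by simp
    ultimately show "F y = 0" unfolding F_def by simp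
  qed
  then show ?thesis by blast
qed



lemma MP_inv_eq:
  assumes W: "subspace W" and fl: "linear_on smul UNIV f"
    and h: "is_MP_inverse_on smul g W f F'" "\<forall>x. x \<notin> W \<longrightarrow> F' x = 0"
  shows "MP_inv smul g W f = F'"
  unfolding MP_inv_def
proof (rule the_equality)
  show "is_MP_inverse_on smul g W f F' \<and> (\<forall>x. x \<notin> W \<longrightarrow> F' x = 0)" using h by simp
  fix f' assume "is_MP_inverse_on smul g W f f' \<and> (\<forall>x. x \<notin> W \<longrightarrow> f' x = 0)"
  then show "f' = F'" using MP_unique[OF W fl _ _ h] by simp
qed

lemma lin_sum: "linear_on smul UNIV F \<Longrightarrow> F (sum h G) = (\<Sum>i\<in>G. F (h i))"
proof (induction G rule: infinite_finite_induct)
  case (infinite A)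
  then show ?case using lin_add[OF infinite(2), of 0 0] by simp
next
  case empty
  then show ?case using lin_add[OF empty, of 0 0] by simp
next
  case (insert x F)
  then show ?case using lin_add[OF insert(4)] by simp
qed
end

locale cor = ips smul cnj' g
  for smul :: "'k::real_field \<Rightarrow> 'v::ab_group_add \<Rightarrow> 'v" and cnj' g +
  fixes f :: "'v \<Rightarrow> 'v" and I :: "'i set" and H :: "'i \<Rightarrow> 'v set"
  assumes hyps: "cor_hyps smul cnj' g f I H"
begin

lemma fl: "linear_on smul UNIV f" using hyps unfolding cor_hyps_def by simp
lemma fadd: "f (x + y) = f x + f y" using lin_add[OF fl] by simp
lemma fsm: "f (smul a x) = smul a (f x)" using lin_smul[OF fl] by simp
lemma f0: "f 0 = 0" using fadd[of 0 0] by simp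
lemma fdiff: "f (x - y) = f x - f y" by (metis add_diff_cancel fadd diff_add_cancel)
lemma fsum: "f (sum h G) = (\<Sum>i\<in>G. f (h i))"
  by (induction G rule: infinite_finite_induct) (simp_all add: f0 fadd)

lemma HB: "i \<in> I \<Longrightarrow> \<exists>B. finite B \<and> H i = span B"
  using hyps unfolding cor_hyps_def fin_dim_subspace_def by simp
lemma Hsub: "i \<in> I \<Longrightarrow> subspace (H i)"
  using HB by (metis subspace_span)
lemma Hinv: "i \<in> I \<Longrightarrow> x \<in> H i \<Longrightarrow> f x \<in> H i"
  using hyps unfolding cor_hyps_def by blast

lemma orth: assumes "i \<in> I" "j \<in> I" "i \<noteq> j" "x \<in> H i" "y \<in> H j"
  shows "g y x = 0"
proof -
  have "H i \<subseteq> perp_in g UNIV (subspace_sum (I - {i}) H)"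
    using hyps assms(1) unfolding cor_hyps_def by simp
  then have x: "x \<in> perp_in g UNIV (subspace_sum (I - {i}) H)" using assms(4) by blast
  have "y = sum (\<lambda>_. y) {j}" by simp
  then have "y \<in> subspace_sum (I - {i}) H" unfolding subspace_sum_def
    using assms by (intro CollectI exI[of _ "{j}"] exI[of _ "\<lambda>_. y"]) simp
  then show ?thesis using x unfolding perp_in_def by simp
qed

lemma orth2: assumes "i \<in> I" "j \<in> I" "i \<noteq> j" "x \<in> H i" "y \<in> H j"
  shows "g x y = 0"
  using orth[OF assms] g_sym0 by simp

lemma decomp: "\<exists>G h. finite G \<and> G \<subseteq> I \<and> (\<forall>i\<in>G. h i \<in> H i) \<and> v = sum h G"
proof -
  have "internal_direct_sum I H" using hyps unfolding cor_hyps_def by simp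
  then obtain h where h: "\<forall>i\<in>I. h i \<in> H i" "\<forall>i. i \<notin> I \<longrightarrow> h i = 0"
      "finite {i. h i \<noteq> 0}" "v = sum h {i. h i \<noteq> 0}"
    unfolding internal_direct_sum_def by metis
  have "{i. h i \<noteq> 0} \<subseteq> I" using h(2) by blast
  then show ?thesis using h by (intro exI[of _ "{i. h i \<noteq> 0}"] exI[of _ h]) blast
qed

lemma g_sum_single1:
  assumes "finite G" "G \<subseteq> I" "\<forall>j\<in>G. w j \<in> H j" "i \<in> I" "x \<in> H i"
  shows "g (sum w G) x = (if i \<in> G then g (w i) x else 0)"
proof -
  have "g (sum w G) x = (\<Sum>j\<in>G. g (w j) x)" by (rule g_sum1)
  also have "\<dots> = (\<Sum>j\<in>G. if j = i then g (w i) x else 0)"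
  proof (rule sum.cong)
    fix j assume j: "j \<in> G"
    show "g (w j) x = (if j = i then g (w i) x else 0)"
    proof (cases "j = i")
      case False
      then show ?thesis using orth[of i j x "w j"] assms j by auto
    qed simp
  qed simp
  also have "\<dots> = (if i \<in> G then g (w i) x else 0)" using assms(1) by (simp add: sum.delta')
  finally show ?thesis .
qed

lemma zero_sum:
  assumes "finite G" "G \<subseteq> I" "\<forall>j\<in>G. w j \<in> H j" "sum w G = 0" "i \<in> G"
  shows "w i = 0"
proof -
  have "g (sum w G) (w i) = g (w i) (w i)"
    using g_sum_single1[OF assms(1,2,3), of i "w i"] assms by auto
  then have "g (w i) (w i) = 0" using assms(4) by simp
  then show ?thesis by (rule aniso)
qed


lemma glob_perp:
  assumes Udec: "\<And>u. u \<in> U \<Longrightarrow> \<exists>G w. finite G \<and> G \<subseteq> I \<and> (\<forall>j\<in>G. w j \<in> P j) \<and> u = sum w G"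
    and Psub: "\<And>j. j \<in> I \<Longrightarrow> P j \<subseteq> H j"
    and i: "i \<in> I" and q: "q \<in> perp_in g (H i) (P i)"
  shows "q \<in> perp_in g UNIV U"
  unfolding perp_in_def
proof (intro CollectI conjI ballI UNIV_I)
  fix u assume "u \<in> U"
  then obtain G w where Gw: "finite G" "G \<subseteq> I" "\<forall>j\<in>G. w j \<in> P j" "u = sum w G"
    using Udec[OF \<open>u \<in> U\<close>] by (elim exE conjE) (rule that)
  have wH: "\<forall>j\<in>G. w j \<in> H j" using Gw(2,3) Psub by (meson subsetD)
  have qH: "q \<in> H i" using q unfolding perp_in_def by simp
  have "g u q = (if i \<in> G then g (w i) q else 0)"
    using g_sum_single1[OF Gw(1,2) wH i qH] Gw(4) by simp
  moreover have "i \<in> G \<Longrightarrow> g (w i) q = 0" using q Gw(3) unfolding perp_in_def by simp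
  ultimately show "g u q = 0" by simp
qed

lemma glob_ds:
  assumes Udec: "\<And>u. u \<in> U \<Longrightarrow> \<exists>G w. finite G \<and> G \<subseteq> I \<and> (\<forall>j\<in>G. w j \<in> P j) \<and> u = sum w G"
    and Psub: "\<And>j. j \<in> I \<Longrightarrow> P j \<subseteq> H j"
    and Ucl: "\<And>G w. finite G \<Longrightarrow> G \<subseteq> I \<Longrightarrow> (\<forall>j\<in>G. w j \<in> P j) \<Longrightarrow> sum w G \<in> U"
    and Usub: "subspace U"
    and loc: "\<And>i x. i \<in> I \<Longrightarrow> x \<in> H i \<Longrightarrow> \<exists>p q. p \<in> P i \<and> q \<in> perp_in g (H i) (P i) \<and> x = p + q"
  shows "direct_sum2 UNIV U (perp_in g UNIV U)"
proof (rule ds_intro[OF Usub])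
  show "subspace (perp_in g UNIV U)" by (rule perp_subspace) simp
  show "\<And>x. x \<in> U \<Longrightarrow> x \<in> perp_in g UNIV U \<Longrightarrow> x = 0" by (rule perp_inter)
  fix v :: 'v
  obtain G h where Gh: "finite G" "G \<subseteq> I" "\<forall>i\<in>G. h i \<in> H i" "v = sum h G"
    using decomp[of v] by (elim exE conjE) (rule that)
  have "\<forall>i\<in>G. \<exists>pq. fst pq \<in> P i \<and> snd pq \<in> perp_in g (H i) (P i) \<and> h i = fst pq + snd pq"
  proof
    fix i assume iG: "i \<in> G"
    then obtain p q where "p \<in> P i \<and> q \<in> perp_in g (H i) (P i) \<and> h i = p + q"
      using loc[of i "h i"] Gh iG by (meson subsetD)
    then show "\<exists>pq. fst pq \<in> P i \<and> snd pq \<in> perp_in g (H i) (P i) \<and> h i = fst pq + snd pq"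
      by (intro exI[of _ "(p, q)"]) simp
  qed
  then obtain pq where pq: "\<forall>i\<in>G. fst (pq i) \<in> P i \<and> snd (pq i) \<in> perp_in g (H i) (P i) \<and> h i = fst (pq i) + snd (pq i)"
    by (rule bchoice[THEN exE]) (rule that)
  define p where "p = (\<Sum>i\<in>G. fst (pq i))"
  define q where "q = (\<Sum>i\<in>G. snd (pq i))"
  have "v = p + q" unfolding p_def q_def Gh(4) sum.distrib[symmetric]
    using pq by (intro sum.cong) auto
  moreover have "p \<in> U" unfolding p_def using Ucl[OF Gh(1,2)] pq by simp
  moreover have "q \<in> perp_in g UNIV U"
    unfolding q_def
  proof (rule subspace_sum)
    show "subspace (perp_in g UNIV U)" by (rule perp_subspace) simp
    fix i assume "i \<in> G"
    then show "snd (pq i) \<in> perp_in g UNIV U"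
      using glob_perp[where U=U and P=P and i=i and q="snd (pq i)", OF Udec Psub] pq Gh(2) \<open>i \<in> G\<close> by (meson subsetD)
  qed
  ultimately show "\<exists>a b. a \<in> U \<and> b \<in> perp_in g UNIV U \<and> v = a + b"
    by (intro exI[of _ p] exI[of _ q]) simp
qed


lemma subK: "subspace {v \<in> W. f v = 0}" if "subspace W"
  using that unfolding subspace_def using fadd fsm f0 by simp

lemma subM: "subspace (f ` UNIV)"
  unfolding subspace_def
proof (intro conjI ballI allI)
  show "0 \<in> range f" using f0 by (metis rangeI)
  fix x y assume "x \<in> range f" "y \<in> range f"
  then obtain a b where "x = f a" "y = f b" by blast
  then show "x + y \<in> range f" using fadd by (metis rangeI)
next
  fix c x assume "x \<in> range f"
  then obtain a where "x = f a" by blast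
  then show "smul c x \<in> range f" using fsm by (metis rangeI)
qed

lemma locK: assumes i: "i \<in> I"
  shows "direct_sum2 (H i) {v \<in> H i. f v = 0} (perp_in g (H i) {v \<in> H i. f v = 0})"
proof -
  obtain B where B: "finite B" "H i = span B" using HB[OF i] by blast
  have KB: "{v \<in> H i. f v = 0} \<subseteq> span B" unfolding B(2)[symmetric] by (rule Collect_restrict)
  obtain S where S: "finite S" "S \<subseteq> {v \<in> H i. f v = 0}" "{v \<in> H i. f v = 0} = span S"
    using fin_dim_sub[OF B(1) KB subK[OF Hsub[OF i]]] by (elim exE conjE) (rule that)
  have "S \<subseteq> H i" by (rule order_trans[OF S(2) Collect_restrict])
  from ds_fin[OF Hsub[OF i] S(1) this] show ?thesis unfolding S(3)[symmetric] .
qed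

lemma fimg: "f ` span B = span (f ` B)"
proof -
  have "module smul" by (rule module_iff_vector_space[THEN iffD2, OF vector_space_axioms])
  then have "module_hom smul smul f" unfolding module_hom_def module_hom_axioms_def
    using fadd fsm by simp
  from module_hom.span_image[OF this] show ?thesis by simp
qed

lemma locM: assumes i: "i \<in> I"
  shows "direct_sum2 (H i) (f ` H i) (perp_in g (H i) (f ` H i))"
proof -
  obtain B where B: "finite B" "H i = span B" using HB[OF i] by blast
  have "f ` B \<subseteq> H i"
  proof (rule image_subsetI)
    fix b assume "b \<in> B"
    then have "b \<in> span B" by (rule subsetD[OF span_superset])
    then have "b \<in> H i" using B(2) by simp
    then show "f b \<in> H i" by (rule Hinv[OF i])
  qed
  from ds_fin[OF Hsub[OF i] _ this] B(1) show ?thesis unfolding B(2) fimg by simp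
qed

lemma K_dec: "u \<in> {v \<in> UNIV. f v = 0} \<Longrightarrow>
   \<exists>G w. finite G \<and> G \<subseteq> I \<and> (\<forall>j\<in>G. w j \<in> {v \<in> H j. f v = 0}) \<and> u = sum w G"
proof -
  assume u: "u \<in> {v \<in> UNIV. f v = 0}"
  obtain G h where Gh: "finite G" "G \<subseteq> I" "\<forall>i\<in>G. h i \<in> H i" "u = sum h G"
    using decomp[of u] by (elim exE conjE) (rule that)
  have fH: "\<forall>j\<in>G. f (h j) \<in> H j" using Gh(2,3) Hinv by (meson subsetD)
  have "(\<Sum>j\<in>G. f (h j)) = 0" using u Gh(4) fsum[of h G] by simp
  then have "\<forall>j\<in>G. f (h j) = 0" using zero_sum[OF Gh(1,2) fH] by blast
  then have "\<forall>j\<in>G. h j \<in> {v \<in> H j. f v = 0}" using Gh(3) by simp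
  then show ?thesis using Gh by (intro exI[of _ G] exI[of _ h]) simp
qed

lemma M_dec: "u \<in> f ` UNIV \<Longrightarrow>
   \<exists>G w. finite G \<and> G \<subseteq> I \<and> (\<forall>j\<in>G. w j \<in> f ` H j) \<and> u = sum w G"
proof -
  assume "u \<in> f ` UNIV"
  then obtain v where v: "u = f v" by blast
  obtain G h where Gh: "finite G" "G \<subseteq> I" "\<forall>i\<in>G. h i \<in> H i" "v = sum h G"
    using decomp[of v] by (elim exE conjE) (rule that)
  have "u = (\<Sum>j\<in>G. f (h j))" using v Gh(4) fsum by simp
  moreover have "\<forall>j\<in>G. f (h j) \<in> f ` H j" using Gh(3) by simp
  ultimately show ?thesis using Gh by (intro exI[of _ G] exI[of _ "\<lambda>j. f (h j)"]) simp
qed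

lemma admK: "direct_sum2 UNIV {v \<in> UNIV. f v = 0} (perp_in g UNIV {v \<in> UNIV. f v = 0})"
proof (rule glob_ds[where P = "\<lambda>j. {v \<in> H j. f v = 0}"])
  show "\<And>u. u \<in> {v \<in> UNIV. f v = 0} \<Longrightarrow>
   \<exists>G w. finite G \<and> G \<subseteq> I \<and> (\<forall>j\<in>G. w j \<in> {v \<in> H j. f v = 0}) \<and> u = sum w G"
    by (rule K_dec)
  show "\<And>j. {v \<in> H j. f v = 0} \<subseteq> H j" by blast
  show "sum w G \<in> {v \<in> UNIV. f v = 0}" if "\<forall>j\<in>G. w j \<in> {v \<in> H j. f v = 0}" for G w
    using that fsum[of w G] by simp
  show "subspace {v \<in> UNIV. f v = 0}" using subK[OF subspace_UNIV] .
  show "\<exists>p q. p \<in> {v \<in> H i. f v = 0} \<and> q \<in> perp_in g (H i) {v \<in> H i. f v = 0} \<and> x = p + q"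
    if "i \<in> I" "x \<in> H i" for i x
    using ds_ex[OF locK[OF that(1)] that(2)] .
qed

lemma admM: "direct_sum2 UNIV (f ` UNIV) (perp_in g UNIV (f ` UNIV))"
proof (rule glob_ds[where P = "\<lambda>j. f ` H j"])
  show "\<And>u. u \<in> f ` UNIV \<Longrightarrow>
   \<exists>G w. finite G \<and> G \<subseteq> I \<and> (\<forall>j\<in>G. w j \<in> f ` H j) \<and> u = sum w G"
    by (rule M_dec)
  show "\<And>j. j \<in> I \<Longrightarrow> f ` H j \<subseteq> H j" by (rule image_subsetI) (rule Hinv)
  show "sum w G \<in> f ` UNIV" if "\<forall>j\<in>G. w j \<in> f ` H j" for G w
  proof -
    have "\<forall>j\<in>G. \<exists>y. w j = f y" using that by fast
    then obtain x where "\<forall>j\<in>G. w j = f (x j)" by (rule bchoice[THEN exE]) (rule that)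
    then have "sum w G = f (sum x G)" using fsum[of x G] by simp
    then show ?thesis by simp
  qed
  show "subspace (f ` UNIV)" by (rule subM)
  show "\<exists>p q. p \<in> f ` H i \<and> q \<in> perp_in g (H i) (f ` H i) \<and> x = p + q"
    if "i \<in> I" "x \<in> H i" for i x
    using ds_ex[OF locM[OF that(1)] that(2)] .
qed

lemma adm: "admissible_on g UNIV f"
  unfolding admissible_on_def using admK admM by simp


definition "Fg = MP_inv smul g UNIV f"

lemma Fg_is: "is_MP_inverse_on smul g UNIV f Fg"
proof -
  obtain F0 where F0: "is_MP_inverse_on smul g UNIV f F0" using MP_exists[OF fl adm] by (elim exE)
  have "MP_inv smul g UNIV f = F0" using MP_inv_eq[OF subspace_UNIV fl F0] by simp
  then show ?thesis unfolding Fg_def using F0 by simp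
qed

lemma Fg_lin: "linear_on smul UNIV Fg" using isMP_D(2)[OF Fg_is] .
lemma Fg_M: "y \<in> f ` UNIV \<Longrightarrow> Fg y \<in> perp_in g UNIV {v \<in> UNIV. f v = 0} \<and> f (Fg y) = y"
  using isMP_D(4,5)[OF Fg_is] by simp
lemma Fg_Mp: "y \<in> perp_in g UNIV (f ` UNIV) \<Longrightarrow> Fg y = 0"
  using isMP_D(6)[OF Fg_is] by simp

lemma Kp_inj:
  assumes "a \<in> perp_in g UNIV {v \<in> UNIV. f v = 0}" "b \<in> perp_in g UNIV {v \<in> UNIV. f v = 0}" "f a = f b"
  shows "a = b"
proof -
  have "a - b \<in> perp_in g UNIV {v \<in> UNIV. f v = 0}"
    using subspace_diff[OF perp_subspace[OF subspace_UNIV] assms(1,2)] .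
  moreover have "a - b \<in> {v \<in> UNIV. f v = 0}" using assms(3) fdiff by simp
  ultimately have "a - b = 0" by (intro perp_inter)
  then show ?thesis by simp
qed

lemma Kloc_glob: assumes "i \<in> I" "q \<in> perp_in g (H i) {v \<in> H i. f v = 0}"
  shows "q \<in> perp_in g UNIV {v \<in> UNIV. f v = 0}"
proof (rule glob_perp[where U = "{v \<in> UNIV. f v = 0}" and P = "\<lambda>j. {v \<in> H j. f v = 0}"])
  fix u assume "u \<in> {v \<in> UNIV. f v = 0}"
  then show "\<exists>G w. finite G \<and> G \<subseteq> I \<and> (\<forall>j\<in>G. w j \<in> {v \<in> H j. f v = 0}) \<and> u = sum w G"
    by (rule K_dec)
next
  fix j show "{v \<in> H j. f v = 0} \<subseteq> H j" by (rule Collect_restrict)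
qed (rule assms)+

lemma Mloc_glob: assumes "i \<in> I" "q \<in> perp_in g (H i) (f ` H i)"
  shows "q \<in> perp_in g UNIV (f ` UNIV)"
proof (rule glob_perp[where U = "f ` UNIV" and P = "\<lambda>j. f ` H j"])
  fix u assume "u \<in> f ` UNIV"
  then show "\<exists>G w. finite G \<and> G \<subseteq> I \<and> (\<forall>j\<in>G. w j \<in> f ` H j) \<and> u = sum w G"
    by (rule M_dec)
next
  fix j assume "j \<in> I" then show "f ` H j \<subseteq> H j" by (intro image_subsetI Hinv)
qed (rule assms)+

lemma Fg_inv: assumes i: "i \<in> I" and x: "x \<in> H i" shows "Fg x \<in> H i"
proof -
  obtain y z where yz: "y \<in> f ` H i" "z \<in> perp_in g (H i) (f ` H i)" "x = y + z"
    using ds_ex[OF locM[OF i] x] by (elim exE conjE) (rule that)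
  have Fz: "Fg z = 0" using Fg_Mp Mloc_glob[OF i yz(2)] by simp
  obtain w where w: "w \<in> H i" "y = f w" using yz(1) by (elim imageE) (rule that)
  obtain k p where kp: "k \<in> {v \<in> H i. f v = 0}" "p \<in> perp_in g (H i) {v \<in> H i. f v = 0}" "w = k + p"
    using ds_ex[OF locK[OF i] w(1)] by (elim exE conjE) (rule that)
  have pK: "p \<in> perp_in g UNIV {v \<in> UNIV. f v = 0}" using Kloc_glob[OF i kp(2)] .
  have fp: "f p = y" using kp w fadd by simp
  have yM: "y \<in> range f" using w by simp
  have "Fg y = p" using Kp_inj[OF _ pK] Fg_M[OF yM] fp by simp
  moreover have "Fg x = Fg y + Fg z" using lin_add[OF Fg_lin] yz(3) by simp
  moreover have "p \<in> H i" using kp(2) unfolding perp_in_def by simp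
  ultimately show ?thesis using Fz by simp
qed

lemma loc_MP: assumes i: "i \<in> I"
  shows "MP_inv smul g (H i) f = (\<lambda>x. if x \<in> H i then Fg x else 0)"
proof (rule MP_inv_eq[OF Hsub[OF i] fl])
  show "\<forall>x. x \<notin> H i \<longrightarrow> (if x \<in> H i then Fg x else 0) = 0" by simp
  have HS: "subspace (H i)" using Hsub[OF i] .
  show "is_MP_inverse_on smul g (H i) f (\<lambda>x. if x \<in> H i then Fg x else 0)"
    unfolding is_MP_inverse_on_def
  proof (intro conjI ballI)
    show "admissible_on g (H i) f" unfolding admissible_on_def using locK[OF i] locM[OF i] by simp
    show "linear_on smul (H i) (\<lambda>x. if x \<in> H i then Fg x else 0)"
      unfolding linear_on_def
      using lin_add[OF Fg_lin] lin_smul[OF Fg_lin] subspace_add[OF HS] subspace_scale[OF HS] by simp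
    show "(\<lambda>x. if x \<in> H i then Fg x else 0) ` H i \<subseteq> H i"
    proof (rule image_subsetI)
      fix x assume "x \<in> H i" then show "(if x \<in> H i then Fg x else 0) \<in> H i" using Fg_inv[OF i] by simp
    qed
  next
    fix y assume y: "y \<in> f ` H i"
    then obtain w where w: "w \<in> H i" "y = f w" by (elim imageE) (rule that)
    then have yH: "y \<in> H i" using Hinv[OF i] by simp
    have yM: "y \<in> f ` UNIV" using w by simp
    have FyH: "Fg y \<in> H i" using Fg_inv[OF i yH] .
    have Fy: "Fg y \<in> perp_in g UNIV {v \<in> UNIV. f v = 0}" "f (Fg y) = y" using Fg_M[OF yM] by simp_all
    show "f ((\<lambda>x. if x \<in> H i then Fg x else 0) y) = y" using yH Fy by simp
    show "(\<lambda>x. if x \<in> H i then Fg x else 0) y \<in> perp_in g (H i) {v \<in> H i. f v = 0}"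
      using yH FyH Fy(1) unfolding perp_in_def by simp
  next
    fix y assume y: "y \<in> perp_in g (H i) (f ` H i)"
    then have "y \<in> H i" unfolding perp_in_def by simp
    then show "(\<lambda>x. if x \<in> H i then Fg x else 0) y = 0"
      using Fg_Mp[OF Mloc_glob[OF i y]] by simp
  qed
qed

lemma MP_plus_eq: "MP_plus smul g I H f = Fg"
  unfolding MP_plus_def
proof (rule the_equality)
  show "linear_on smul UNIV Fg \<and> (\<forall>i\<in>I. \<forall>x\<in>H i. Fg x = MP_inv smul g (H i) f x)"
    using Fg_lin loc_MP by simp
  fix fp assume fp: "linear_on smul UNIV fp \<and> (\<forall>i\<in>I. \<forall>x\<in>H i. fp x = MP_inv smul g (H i) f x)"
  show "fp = Fg"
  proof
    fix v
    obtain G h where Gh: "finite G" "G \<subseteq> I" "\<forall>i\<in>G. h i \<in> H i" "v = sum h G"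
      using decomp[of v] by (elim exE conjE) (rule that)
    have "\<forall>j\<in>G. fp (h j) = Fg (h j)"
    proof
      fix j assume j: "j \<in> G"
      have jI: "j \<in> I" using subsetD[OF Gh(2) j] .
      have hj: "h j \<in> H j" using Gh(3) j by simp
      have "fp (h j) = MP_inv smul g (H j) f (h j)" using fp jI hj by simp
      then show "fp (h j) = Fg (h j)" using loc_MP[OF jI] hj by simp
    qed
    then show "fp v = Fg v" using lin_sum[OF Fg_lin, of h G] lin_sum[of fp h G] fp Gh(4) by simp
  qed
qed

lemma main: "cor_concl smul g f I H"
  unfolding cor_concl_def using adm MP_plus_eq Fg_def by simp

end

theorem corollary3p21:
  shows "(\<forall>(smul :: real \<Rightarrow> 'v::ab_group_add \<Rightarrow> 'v) g f (I :: 'i set) H.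
            cor_hyps smul (\<lambda>x. x) g f I H \<longrightarrow> cor_concl smul g f I H) \<and>
         (\<forall>(smul :: complex \<Rightarrow> 'w::ab_group_add \<Rightarrow> 'w) g f (I :: 'j set) H.
            cor_hyps smul cnj g f I H \<longrightarrow> cor_concl smul g f I H)"
proof (intro conjI allI impI)
  fix smul :: "real \<Rightarrow> 'v \<Rightarrow> 'v" and g f and I :: "'i set" and H
  assume h: "cor_hyps smul (\<lambda>x. x) g f I H"
  then have ip: "inner_product smul (\<lambda>x. x) g" unfolding cor_hyps_def by simp
  then have vs: "vector_space smul" unfolding inner_product_def by simp
  have "cor smul (\<lambda>x. x) g f I H"
    by (rule cor.intro[OF ips.intro[OF vs]]) (simp_all add: ips_axioms_def cor_axioms_def ip h)
  then show "cor_concl smul g f I H" by (rule cor.main)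
next
  fix smul :: "complex \<Rightarrow> 'w \<Rightarrow> 'w" and g f and I :: "'j set" and H
  assume h: "cor_hyps smul cnj g f I H"
  then have ip: "inner_product smul cnj g" unfolding cor_hyps_def by simp
  then have vs: "vector_space smul" unfolding inner_product_def by simp
  have "cor smul cnj g f I H"
    by (rule cor.intro[OF ips.intro[OF vs]]) (simp_all add: ips_axioms_def cor_axioms_def ip h)
  then show "cor_concl smul g f I H" by (rule cor.main)
qed

end
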